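(* Consider a mean-variance team stochastic game as described in the context, with trade-off parameter $\beta\ge 0$. For any two joint policies $\boldsymbol{\mu},\boldsymbol{\mu}'\in\mathcal{U}$, $$J(\boldsymbol{\mu}')-J(\boldsymbol{\mu})=\mathbb{E}_{s\sim\pi^{\boldsymbol{\mu}'},\,\boldsymbol{a}\sim\boldsymbol{\mu}'(\cdot|s)}\big[A_f^{\boldsymbol{\mu}}(s,\boldsymbol{a})\big]+\beta\big(\eta^{\boldsymbol{\mu}'}-\eta^{\boldsymbol{\mu}}\big)^2 .$$
   Context: A team stochastic game consists of a finite set of agents $\mathcal{N}=\{1,\dots,N\}$, a finite state space $\mathcal{S}$, finite action sets $\mathcal{A}_i$ ($i\in\mathcal{N}$) with joint action set $\mathcal{A}=\prod_{i}\mathcal{A}_i$, a transition kernel $P(s'|s,\boldsymbol{a})$ and a common reward function $r:\mathcal{S}\times\mathcal{A}\to\mathbb{R}$. A stationary policy of agent $i$ is a map $\mu_i:\mathcal{S}\to\Delta(\mathcal{A}_i)$; $\mathcal{U}_i$ is the set of such policies. A joint policy $\boldsymbol{\mu}=(\mu_1,\dots,\mu_N)\in\mathcal{U}=\prod_i\mathcal{U}_i$ chooses $\boldsymbol{a}=(a_1,\dots,a_N)$ in state $s$ with probability $\boldsymbol{\mu}(\boldsymbol{a}|s)=\prod_i\mu_i(a_i|s)$, inducing the Markov chain $P^{\boldsymbol{\mu}}(s'|s)=\sum_{\boldsymbol{a}}\boldsymbol{\mu}(\boldsymbol{a}|s)P(s'|s,\boldsymbol{a})$. Standing assumption: for every $\boldsymbol{\mu}\in\mathcal{U}$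 this chain is ergodic, with stationary distribution $\pi^{\boldsymbol{\mu}}$ (so $\pi^{\boldsymbol{\mu}}(s)>0$ for all $s$). Long-run average reward: $\eta^{\boldsymbol{\mu}}=\sum_s\pi^{\boldsymbol{\mu}}(s)\sum_{\boldsymbol{a}}\boldsymbol{\mu}(\boldsymbol{a}|s)r(s,\boldsymbol{a})$; long-run variance: $\zeta^{\boldsymbol{\mu}}=\sum_s\pi^{\boldsymbol{\mu}}(s)\sum_{\boldsymbol{a}}\boldsymbol{\mu}(\boldsymbol{a}|s)(r(s,\boldsymbol{a})-\eta^{\boldsymbol{\mu}})^2$ (equal to $\lim_{T\to\infty}\frac1T\mathbb{E}_{\boldsymbol{\mu}}\sum_{t<T}(r(s_t,\boldsymbol{a}_t)-\eta^{\boldsymbol{\mu}})^2$). For fixed $\beta\ge0$ the mean-variance performance is $J(\boldsymbol{\mu})=J^{\boldsymbol{\mu}}=\eta^{\boldsymbol{\mu}}-\beta\zeta^{\boldsymbol{\mu}}$. Surrogate reward: $f^{\boldsymbol{\mu}}(s,\boldsymbol{a})=r(s,\boldsymbol{a})-\beta(r(s,\boldsymbol{a})-\eta^{\boldsymbol{\mu}})^2$, $f^{\boldsymbol{\mu}}(s)=\sum_{\boldsymbol{a}}\boldsymbol{\mu}(\boldsymbol{a}|s)f^{\boldsymbol{\mu}}(s,\boldsymbol{a})$. The value function $V_f^{\boldsymbol{\mu}}$ is a solution of the Poisson equation $V(s)=f^{\boldsymbol{\mu}}(s)-J^{\boldsymbol{\mu}}+\sum_{s'}P^{\boldsymbol{\mu}}(s'|s)V(s')$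 for all $s$ (formally $V_f^{\boldsymbol{\mu}}(s)=\mathbb{E}_{\boldsymbol{\mu}}[\sum_{t\ge0}(f^{\boldsymbol{\mu}}(s_t,\boldsymbol{a}_t)-J^{\boldsymbol{\mu}})\mid s_0=s]$; it is unique up to an additive constant, which does not affect $A_f^{\boldsymbol{\mu}}$). Action-value function: $Q_f^{\boldsymbol{\mu}}(s,\boldsymbol{a})=f^{\boldsymbol{\mu}}(s,\boldsymbol{a})-J^{\boldsymbol{\mu}}+\sum_{s'}P(s'|s,\boldsymbol{a})V_f^{\boldsymbol{\mu}}(s')$; advantage function: $A_f^{\boldsymbol{\mu}}(s,\boldsymbol{a})=Q_f^{\boldsymbol{\mu}}(s,\boldsymbol{a})-V_f^{\boldsymbol{\mu}}(s)$. *)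

theory Defs
  imports "HOL-Analysis.Analysis"
begin

(* Team stochastic game.
   's : finite state type, 'i : finite agent type, 'b : type of individual actions.
   P s a s' : transition kernel, r s a : common reward. *)

definition joint_actions :: "('i \<Rightarrow> 'b set) \<Rightarrow> ('i \<Rightarrow> 'b) set" where
  "joint_actions A = PiE UNIV A"

definition valid_game ::
  "('i::finite \<Rightarrow> 'b set) \<Rightarrow> ('s::finite \<Rightarrow> ('i \<Rightarrow> 'b) \<Rightarrow> 's \<Rightarrow> real) \<Rightarrow> bool" where
  "valid_game A P \<longleftrightarrow> (\<forall>i. finite (A i) \<and> A i \<noteq> {}) \<and>
     (\<forall>s. \<forall>a\<in>joint_actions A. (\<forall>s'. P s a s' \<ge> 0) \<and> (\<Sum>s'\<in>UNIV. P s a s') = 1)"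

definition is_policy :: "'b set \<Rightarrow> ('s \<Rightarrow> 'b \<Rightarrow> real) \<Rightarrow> bool" where
  "is_policy Ai m \<longleftrightarrow> (\<forall>s. (\<forall>b. m s b \<ge> 0) \<and> (\<forall>b. b \<notin> Ai \<longrightarrow> m s b = 0)
       \<and> (\<Sum>b\<in>Ai. m s b) = 1)"

definition is_joint_policy :: "('i \<Rightarrow> 'b set) \<Rightarrow> ('i \<Rightarrow> 's \<Rightarrow> 'b \<Rightarrow> real) \<Rightarrow> bool" where
  "is_joint_policy A mu \<longleftrightarrow> (\<forall>i. is_policy (A i) (mu i))"

definition jprob :: "('i::finite \<Rightarrow> 's \<Rightarrow> 'b \<Rightarrow> real) \<Rightarrow> 's \<Rightarrow> ('i \<Rightarrow> 'b) \<Rightarrow> real" where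
  "jprob mu s a = (\<Prod>i\<in>UNIV. mu i s (a i))"

definition Pmu :: "('i::finite \<Rightarrow> 'b set) \<Rightarrow> ('s \<Rightarrow> ('i \<Rightarrow> 'b) \<Rightarrow> 's \<Rightarrow> real)
     \<Rightarrow> ('i \<Rightarrow> 's \<Rightarrow> 'b \<Rightarrow> real) \<Rightarrow> 's \<Rightarrow> 's \<Rightarrow> real" where
  "Pmu A P mu s s' = (\<Sum>a\<in>joint_actions A. jprob mu s a * P s a s')"

fun nstep :: "('s::finite \<Rightarrow> 's \<Rightarrow> real) \<Rightarrow> nat \<Rightarrow> 's \<Rightarrow> 's \<Rightarrow> real" where
  "nstep Q 0 s s' = (if s = s' then 1 else 0)"
| "nstep Q (Suc n) s s' = (\<Sum>t\<in>UNIV. nstep Q n s t * Q t s')"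

definition irreducible_chain :: "('s::finite \<Rightarrow> 's \<Rightarrow> real) \<Rightarrow> bool" where
  "irreducible_chain Q \<longleftrightarrow> (\<forall>s s'. \<exists>n>0. nstep Q n s s' > 0)"

definition aperiodic_chain :: "('s::finite \<Rightarrow> 's \<Rightarrow> real) \<Rightarrow> bool" where
  "aperiodic_chain Q \<longleftrightarrow> (\<forall>s. Gcd {n. n > 0 \<and> nstep Q n s s > 0} = 1)"

definition ergodic_chain :: "('s::finite \<Rightarrow> 's \<Rightarrow> real) \<Rightarrow> bool" where
  "ergodic_chain Q \<longleftrightarrow> irreducible_chain Q \<and> aperiodic_chain Q"

definition is_stationary :: "('s::finite \<Rightarrow> 's \<Rightarrow> real) \<Rightarrow> ('s \<Rightarrow> real) \<Rightarrow> bool" where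
  "is_stationary Q p \<longleftrightarrow> (\<forall>s. p s \<ge> 0) \<and> (\<Sum>s\<in>UNIV. p s) = 1 \<and>
      (\<forall>s'. (\<Sum>s\<in>UNIV. p s * Q s s') = p s')"

(* the (unique, for ergodic chains) stationary distribution pi^mu *)
definition stat_dist :: "('i::finite \<Rightarrow> 'b set) \<Rightarrow> ('s::finite \<Rightarrow> ('i \<Rightarrow> 'b) \<Rightarrow> 's \<Rightarrow> real)
     \<Rightarrow> ('i \<Rightarrow> 's \<Rightarrow> 'b \<Rightarrow> real) \<Rightarrow> 's \<Rightarrow> real" where
  "stat_dist A P mu = (THE p. is_stationary (Pmu A P mu) p)"

definition eta :: "('i::finite \<Rightarrow> 'b set) \<Rightarrow> ('s::finite \<Rightarrow> ('i \<Rightarrow> 'b) \<Rightarrow> 's \<Rightarrow> real)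
     \<Rightarrow> ('s \<Rightarrow> ('i \<Rightarrow> 'b) \<Rightarrow> real) \<Rightarrow> ('i \<Rightarrow> 's \<Rightarrow> 'b \<Rightarrow> real) \<Rightarrow> real" where
  "eta A P r mu = (\<Sum>s\<in>UNIV. stat_dist A P mu s *
       (\<Sum>a\<in>joint_actions A. jprob mu s a * r s a))"

definition zeta :: "('i::finite \<Rightarrow> 'b set) \<Rightarrow> ('s::finite \<Rightarrow> ('i \<Rightarrow> 'b) \<Rightarrow> 's \<Rightarrow> real)
     \<Rightarrow> ('s \<Rightarrow> ('i \<Rightarrow> 'b) \<Rightarrow> real) \<Rightarrow> ('i \<Rightarrow> 's \<Rightarrow> 'b \<Rightarrow> real) \<Rightarrow> real" where
  "zeta A P r mu = (\<Sum>s\<in>UNIV. stat_dist A P mu s *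
       (\<Sum>a\<in>joint_actions A. jprob mu s a * (r s a - eta A P r mu)\<^sup>2))"

definition Jmv :: "real \<Rightarrow> ('i::finite \<Rightarrow> 'b set) \<Rightarrow> ('s::finite \<Rightarrow> ('i \<Rightarrow> 'b) \<Rightarrow> 's \<Rightarrow> real)
     \<Rightarrow> ('s \<Rightarrow> ('i \<Rightarrow> 'b) \<Rightarrow> real) \<Rightarrow> ('i \<Rightarrow> 's \<Rightarrow> 'b \<Rightarrow> real) \<Rightarrow> real" where
  "Jmv \<beta> A P r mu = eta A P r mu - \<beta> * zeta A P r mu"

definition fsur :: "real \<Rightarrow> ('i::finite \<Rightarrow> 'b set) \<Rightarrow> ('s::finite \<Rightarrow> ('i \<Rightarrow> 'b) \<Rightarrow> 's \<Rightarrow> real)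
     \<Rightarrow> ('s \<Rightarrow> ('i \<Rightarrow> 'b) \<Rightarrow> real) \<Rightarrow> ('i \<Rightarrow> 's \<Rightarrow> 'b \<Rightarrow> real) \<Rightarrow> 's \<Rightarrow> ('i \<Rightarrow> 'b) \<Rightarrow> real" where
  "fsur \<beta> A P r mu s a = r s a - \<beta> * (r s a - eta A P r mu)\<^sup>2"

definition fsur_s :: "real \<Rightarrow> ('i::finite \<Rightarrow> 'b set) \<Rightarrow> ('s::finite \<Rightarrow> ('i \<Rightarrow> 'b) \<Rightarrow> 's \<Rightarrow> real)
     \<Rightarrow> ('s \<Rightarrow> ('i \<Rightarrow> 'b) \<Rightarrow> real) \<Rightarrow> ('i \<Rightarrow> 's \<Rightarrow> 'b \<Rightarrow> real) \<Rightarrow> 's \<Rightarrow> real" where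
  "fsur_s \<beta> A P r mu s = (\<Sum>a\<in>joint_actions A. jprob mu s a * fsur \<beta> A P r mu s a)"

definition poisson_solution :: "real \<Rightarrow> ('i::finite \<Rightarrow> 'b set) \<Rightarrow> ('s::finite \<Rightarrow> ('i \<Rightarrow> 'b) \<Rightarrow> 's \<Rightarrow> real)
     \<Rightarrow> ('s \<Rightarrow> ('i \<Rightarrow> 'b) \<Rightarrow> real) \<Rightarrow> ('i \<Rightarrow> 's \<Rightarrow> 'b \<Rightarrow> real) \<Rightarrow> ('s \<Rightarrow> real) \<Rightarrow> bool" where
  "poisson_solution \<beta> A P r mu V \<longleftrightarrow> (\<forall>s. V s = fsur_s \<beta> A P r mu s - Jmv \<beta> A P r mu
      + (\<Sum>s'\<in>UNIV. Pmu A P mu s s' * V s'))"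

definition Qf :: "real \<Rightarrow> ('i::finite \<Rightarrow> 'b set) \<Rightarrow> ('s::finite \<Rightarrow> ('i \<Rightarrow> 'b) \<Rightarrow> 's \<Rightarrow> real)
     \<Rightarrow> ('s \<Rightarrow> ('i \<Rightarrow> 'b) \<Rightarrow> real) \<Rightarrow> ('i \<Rightarrow> 's \<Rightarrow> 'b \<Rightarrow> real) \<Rightarrow> ('s \<Rightarrow> real)
     \<Rightarrow> 's \<Rightarrow> ('i \<Rightarrow> 'b) \<Rightarrow> real" where
  "Qf \<beta> A P r mu V s a = fsur \<beta> A P r mu s a - Jmv \<beta> A P r mu + (\<Sum>s'\<in>UNIV. P s a s' * V s')"

definition Af :: "real \<Rightarrow> ('i::finite \<Rightarrow> 'b set) \<Rightarrow> ('s::finite \<Rightarrow> ('i \<Rightarrow> 'b) \<Rightarrow> 's \<Rightarrow> real)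
     \<Rightarrow> ('s \<Rightarrow> ('i \<Rightarrow> 'b) \<Rightarrow> real) \<Rightarrow> ('i \<Rightarrow> 's \<Rightarrow> 'b \<Rightarrow> real) \<Rightarrow> ('s \<Rightarrow> real)
     \<Rightarrow> 's \<Rightarrow> ('i \<Rightarrow> 'b) \<Rightarrow> real" where
  "Af \<beta> A P r mu V s a = Qf \<beta> A P r mu V s a - V s"

end

theory Submission
  imports Defs
begin

lemma stoch_ex_inv:
  fixes Q :: "'s::finite \<Rightarrow> 's \<Rightarrow> real"
  assumes rows: "\<And>s. (\<Sum>s'\<in>UNIV. Q s s') = 1"
  shows "\<exists>y. (\<exists>s. y s \<noteq> 0) \<and> (\<forall>s'. (\<Sum>s\<in>UNIV. y s * Q s s') = y s')"
proof -
  define N :: "real^'s^'s" where "N = (\<chi> i j. Q i j - (if i = j then 1 else 0))"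
  have "N *v ((\<chi> j. 1)::real^'s) = 0"
    by (simp add: N_def vec_eq_iff matrix_vector_mult_def sum_subtractf rows)
  moreover have "((\<chi> j. 1)::real^'s) \<noteq> 0" by (simp add: vec_eq_iff)
  ultimately have "\<not> invertible N"
    by (metis invertible_left_inverse matrix_left_invertible_ker)
  hence "det (transpose N) = 0" by (simp add: invertible_det_nz)
  hence "\<not> invertible (transpose N)" by (simp add: invertible_det_nz)
  then obtain x where x: "transpose N *v x = 0" "x \<noteq> 0"
    by (metis invertible_left_inverse matrix_left_invertible_ker)
  show ?thesis
  proof (intro exI[of _ "\<lambda>s. x $ s"] conjI allI)
    show "\<exists>s. x $ s \<noteq> 0" using x(2) by (simp add: vec_eq_iff)
    fix s'
    have "(transpose N *v x) $ s' = 0" using x(1) by simp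
    hence "(\<Sum>s\<in>UNIV. (Q s s' - (if s = s' then 1 else 0)) * x $ s) = 0"
      by (simp add: N_def transpose_def matrix_vector_mult_def)
    moreover have "(\<Sum>s\<in>UNIV. (Q s s' - (if s = s' then 1 else 0)) * x $ s)
        = (\<Sum>s\<in>UNIV. Q s s' * x $ s - (if s = s' then x $ s else 0))"
      by (rule sum.cong) (auto simp: left_diff_distrib)
    ultimately have "(\<Sum>s\<in>UNIV. Q s s' * x $ s) - x $ s' = 0"
      by (simp add: sum_subtractf)
    thus "(\<Sum>s\<in>UNIV. x $ s * Q s s') = x $ s'" by (simp add: mult.commute)
  qed
qed

lemma nstep_nonneg:
  fixes Q :: "'s::finite \<Rightarrow> 's \<Rightarrow> real"
  assumes nn: "\<And>s s'. Q s s' \<ge> 0"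
  shows "nstep Q n s s' \<ge> 0"
  by (induction n arbitrary: s') (auto intro!: sum_nonneg mult_nonneg_nonneg nn)

lemma nstep_inv:
  fixes Q :: "'s::finite \<Rightarrow> 's \<Rightarrow> real"
  assumes inv: "\<And>s'. (\<Sum>s\<in>UNIV. u s * Q s s') = u s'"
  shows "(\<Sum>s\<in>UNIV. u s * nstep Q n s s') = u s'"
proof (induction n arbitrary: s')
  case 0
  then show ?case by (simp add: if_distrib cong: if_cong)
next
  case (Suc n)
  have "(\<Sum>s\<in>UNIV. u s * nstep Q (Suc n) s s')
      = (\<Sum>s\<in>UNIV. \<Sum>t\<in>UNIV. u s * nstep Q n s t * Q t s')"
    by (simp add: sum_distrib_left mult.assoc)
  also have "\<dots> = (\<Sum>t\<in>UNIV. (\<Sum>s\<in>UNIV. u s * nstep Q n s t) * Q t s')"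
    by (subst sum.swap) (simp add: sum_distrib_right)
  also have "\<dots> = u s'" using Suc inv by simp
  finally show ?case .
qed

lemma abs_inv:
  fixes Q :: "'s::finite \<Rightarrow> 's \<Rightarrow> real"
  assumes nn: "\<And>s s'. Q s s' \<ge> 0"
    and rows: "\<And>s. (\<Sum>s'\<in>UNIV. Q s s') = 1"
    and inv: "\<And>s'. (\<Sum>s\<in>UNIV. x s * Q s s') = x s'"
  shows "(\<Sum>s\<in>UNIV. \<bar>x s\<bar> * Q s s') = \<bar>x s'\<bar>"
proof -
  have ge: "\<bar>x t\<bar> \<le> (\<Sum>s\<in>UNIV. \<bar>x s\<bar> * Q s t)" for t
  proof -
    have "\<bar>x t\<bar> = \<bar>\<Sum>s\<in>UNIV. x s * Q s t\<bar>" using inv by simp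
    also have "\<dots> \<le> (\<Sum>s\<in>UNIV. \<bar>x s * Q s t\<bar>)" by (rule sum_abs)
    also have "\<dots> = (\<Sum>s\<in>UNIV. \<bar>x s\<bar> * Q s t)" using nn by (simp add: abs_mult)
    finally show ?thesis .
  qed
  have tot: "(\<Sum>t\<in>UNIV. \<Sum>s\<in>UNIV. \<bar>x s\<bar> * Q s t) = (\<Sum>t\<in>UNIV. \<bar>x t\<bar>)"
    by (subst sum.swap) (simp add: sum_distrib_left[symmetric] rows)
  have "(\<Sum>t\<in>UNIV. (\<Sum>s\<in>UNIV. \<bar>x s\<bar> * Q s t) - \<bar>x t\<bar>) = 0"
    using tot by (simp add: sum_subtractf)
  hence "\<forall>t\<in>UNIV. (\<Sum>s\<in>UNIV. \<bar>x s\<bar> * Q s t) - \<bar>x t\<bar> = 0"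
    using ge by (subst (asm) sum_nonneg_eq_0_iff) auto
  thus ?thesis by simp
qed

lemma pos_zero:
  fixes Q :: "'s::finite \<Rightarrow> 's \<Rightarrow> real"
  assumes nn: "\<And>s s'. Q s s' \<ge> 0"
    and irr: "irreducible_chain Q"
    and unn: "\<And>s. u s \<ge> 0"
    and inv: "\<And>s'. (\<Sum>s\<in>UNIV. u s * Q s s') = u s'"
    and z: "u s0 = 0"
  shows "u s = 0"
proof -
  obtain n where n: "nstep Q n s s0 > 0" using irr unfolding irreducible_chain_def by blast
  have "(\<Sum>t\<in>UNIV. u t * nstep Q n t s0) = 0" using nstep_inv[of u Q, OF inv] z by simp
  hence "\<forall>t\<in>UNIV. u t * nstep Q n t s0 = 0"
    by (subst (asm) sum_nonneg_eq_0_iff) (auto intro!: mult_nonneg_nonneg unn nstep_nonneg nn)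
  hence "u s * nstep Q n s s0 = 0" by simp
  thus ?thesis using n by simp
qed

lemma stat_unique:
  fixes Q :: "'s::finite \<Rightarrow> 's \<Rightarrow> real"
  assumes nn: "\<And>s s'. Q s s' \<ge> 0"
    and rows: "\<And>s. (\<Sum>s'\<in>UNIV. Q s s') = 1"
    and irr: "irreducible_chain Q"
    and p: "is_stationary Q p" and q: "is_stationary Q q"
  shows "p = q"
proof -
  define d where "d s = p s - q s" for s
  have dinv: "(\<Sum>s\<in>UNIV. d s * Q s s') = d s'" for s'
    using p q unfolding is_stationary_def d_def by (simp add: left_diff_distrib sum_subtractf)
  have dsum: "(\<Sum>s\<in>UNIV. d s) = 0"
    using p q unfolding is_stationary_def d_def by (simp add: sum_subtractf)
  have ainv: "(\<Sum>s\<in>UNIV. \<bar>d s\<bar> * Q s s') = \<bar>d s'\<bar>" for s'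
    by (rule abs_inv[OF nn rows dinv])
  define u where "u s = d s + \<bar>d s\<bar>" for s
  have uinv: "(\<Sum>s\<in>UNIV. u s * Q s s') = u s'" for s'
    using dinv[of s'] ainv[of s'] unfolding u_def by (simp add: distrib_right sum.distrib)
  have unn: "u s \<ge> 0" for s unfolding u_def by simp
  have "d = (\<lambda>s. 0)"
  proof (cases "\<exists>s0. d s0 < 0")
    case True
    then obtain s0 where "d s0 < 0" by blast
    hence "u s0 = 0" unfolding u_def by simp
    hence u0: "u s = 0" for s by (rule pos_zero[OF nn irr unn uinv])
    have le: "d s \<le> 0" for s using u0[of s] abs_ge_zero[of "d s"] unfolding u_def by linarith
    have "(\<Sum>s\<in>UNIV. - d s) = 0" using dsum by (simp add: sum_negf)
    hence "\<forall>s\<in>UNIV. - d s = 0" using le by (subst (asm) sum_nonneg_eq_0_iff) auto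
    thus ?thesis by auto
  next
    case False
    hence "\<forall>s\<in>UNIV. d s = 0" using dsum by (subst (asm) sum_nonneg_eq_0_iff) (auto simp: not_less)
    thus ?thesis by auto
  qed
  hence "d s = 0" for s by simp
  hence "p s = q s" for s unfolding d_def by simp
  thus ?thesis by (rule ext)
qed

lemma stat_exists:
  fixes Q :: "'s::finite \<Rightarrow> 's \<Rightarrow> real"
  assumes nn: "\<And>s s'. Q s s' \<ge> 0"
    and rows: "\<And>s. (\<Sum>s'\<in>UNIV. Q s s') = 1"
  shows "\<exists>p. is_stationary Q p"
proof -
  obtain y where y: "(\<exists>s. y s \<noteq> 0) \<and> (\<forall>s'. (\<Sum>s\<in>UNIV. y s * Q s s') = y s')"
    using stoch_ex_inv[of Q, OF rows] by (elim exE)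
  have y0: "\<exists>s. y s \<noteq> 0" using y by (rule conjunct1)
  have yinv: "(\<Sum>s\<in>UNIV. y s * Q s s') = y s'" for s' using y by simp
  have ainv: "(\<Sum>s\<in>UNIV. \<bar>y s\<bar> * Q s s') = \<bar>y s'\<bar>" for s'
    by (rule abs_inv[OF nn rows yinv])
  define c where "c = (\<Sum>s\<in>UNIV. \<bar>y s\<bar>)"
  obtain s1 where s1: "y s1 \<noteq> 0" using y0 by blast
  have "\<bar>y s1\<bar> \<le> c" unfolding c_def by (rule member_le_sum) auto
  hence "c > 0" using s1 by simp
  show ?thesis
  proof (intro exI[of _ "\<lambda>s. \<bar>y s\<bar> / c"])
    show "is_stationary Q (\<lambda>s. \<bar>y s\<bar> / c)"
      unfolding is_stationary_def
    proof (intro conjI allI)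
      show "(\<Sum>s\<in>UNIV. \<bar>y s\<bar> / c) = 1" using \<open>c > 0\<close> by (simp add: sum_divide_distrib[symmetric] c_def)
      fix s'
      show "(\<Sum>s\<in>UNIV. \<bar>y s\<bar> / c * Q s s') = \<bar>y s'\<bar> / c"
        using ainv[of s'] by (simp add: sum_divide_distrib[symmetric])
    qed (use \<open>c > 0\<close> in simp)
  qed
qed

lemma jprob_nonneg:
  assumes "is_joint_policy A mu"
  shows "jprob mu s a \<ge> 0"
  using assms unfolding jprob_def is_joint_policy_def is_policy_def
  by (auto intro!: prod_nonneg)

lemma finite_ja:
  assumes "valid_game A P"
  shows "finite (joint_actions A)"
  using assms unfolding valid_game_def joint_actions_def by (auto intro!: finite_PiE)

lemma jprob_sum:
  assumes game: "valid_game A P" and pol: "is_joint_policy A mu"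
  shows "(\<Sum>a\<in>joint_actions A. jprob mu s a) = 1"
proof -
  have "(\<Sum>a\<in>joint_actions A. jprob mu s a) = (\<Prod>i\<in>UNIV. \<Sum>b\<in>A i. mu i s b)"
    unfolding jprob_def joint_actions_def
    by (rule prod_sum_PiE[symmetric]) (use game in \<open>auto simp: valid_game_def\<close>)
  also have "\<dots> = 1" using pol unfolding is_joint_policy_def is_policy_def by simp
  finally show ?thesis .
qed

lemma Pmu_nonneg:
  assumes game: "valid_game A P" and pol: "is_joint_policy A mu"
  shows "Pmu A P mu s s' \<ge> 0"
  unfolding Pmu_def using game jprob_nonneg[OF pol]
  by (auto intro!: sum_nonneg mult_nonneg_nonneg simp: valid_game_def)

lemma Pmu_rows:
  assumes game: "valid_game A P" and pol: "is_joint_policy A mu"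
  shows "(\<Sum>s'\<in>UNIV. Pmu A P mu s s') = 1"
proof -
  have "(\<Sum>s'\<in>UNIV. Pmu A P mu s s') = (\<Sum>a\<in>joint_actions A. jprob mu s a * (\<Sum>s'\<in>UNIV. P s a s'))"
    unfolding Pmu_def by (subst sum.swap) (simp add: sum_distrib_left)
  also have "\<dots> = (\<Sum>a\<in>joint_actions A. jprob mu s a)"
    using game by (intro sum.cong) (auto simp: valid_game_def)
  also have "\<dots> = 1" by (rule jprob_sum[OF game pol])
  finally show ?thesis .
qed

lemma stat_dist_stationary:
  assumes game: "valid_game A P" and pol: "is_joint_policy A mu"
    and erg: "ergodic_chain (Pmu A P mu)"
  shows "is_stationary (Pmu A P mu) (stat_dist A P mu)"
proof -
  let ?Q = "Pmu A P mu"
  have nn: "\<And>s s'. ?Q s s' \<ge> 0" by (rule Pmu_nonneg[OF game pol])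
  have rows: "\<And>s. (\<Sum>s'\<in>UNIV. ?Q s s') = 1" by (rule Pmu_rows[OF game pol])
  have irr: "irreducible_chain ?Q" using erg by (simp add: ergodic_chain_def)
  obtain p where p: "is_stationary ?Q p" using stat_exists[of ?Q, OF nn rows] by (elim exE)
  have "\<exists>!p. is_stationary ?Q p"
    using p stat_unique[of ?Q, OF nn rows irr] by blast
  thus ?thesis unfolding stat_dist_def by (rule theI')
qed

theorem lemma1:
  fixes A :: "'i::finite \<Rightarrow> 'b set"
    and P :: "'s::finite \<Rightarrow> ('i \<Rightarrow> 'b) \<Rightarrow> 's \<Rightarrow> real"
    and r :: "'s \<Rightarrow> ('i \<Rightarrow> 'b) \<Rightarrow> real"
    and \<beta> :: real
    and mu mu' :: "'i \<Rightarrow> 's \<Rightarrow> 'b \<Rightarrow> real"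
    and V :: "'s \<Rightarrow> real"
  assumes game: "valid_game A P"
    and ergodic: "\<forall>nu. is_joint_policy A nu \<longrightarrow> ergodic_chain (Pmu A P nu)"
    and beta: "\<beta> \<ge> 0"
    and pol: "is_joint_policy A mu"
    and pol': "is_joint_policy A mu'"
    and V: "poisson_solution \<beta> A P r mu V"
  shows "Jmv \<beta> A P r mu' - Jmv \<beta> A P r mu =
           (\<Sum>s\<in>UNIV. stat_dist A P mu' s *
              (\<Sum>a\<in>joint_actions A. jprob mu' s a * Af \<beta> A P r mu V s a))
           + \<beta> * (eta A P r mu' - eta A P r mu)\<^sup>2"
proof -
  define \<pi> where "\<pi> = stat_dist A P mu'"
  define w where "w = jprob mu'"
  define Ja where "Ja = joint_actions A"
  define e where "e = eta A P r mu"
  define e' where "e' = eta A P r mu'"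
  define J where "J = Jmv \<beta> A P r mu"
  define z' where "z' = zeta A P r mu'"
  define D where "D = e' - e"
  define R where "R s = (\<Sum>a\<in>Ja. w s a * r s a)" for s
  define Z where "Z s = (\<Sum>a\<in>Ja. w s a * (r s a - e')\<^sup>2)" for s
  define PV where "PV s = (\<Sum>s'\<in>UNIV. Pmu A P mu' s s' * V s')" for s
  have st: "is_stationary (Pmu A P mu') \<pi>"
    unfolding \<pi>_def using stat_dist_stationary[OF game pol'] ergodic pol' by blast
  have fin: "finite Ja" unfolding Ja_def by (rule finite_ja[OF game])
  have wsum: "(\<Sum>a\<in>Ja. w s a) = 1" for s unfolding Ja_def w_def by (rule jprob_sum[OF game pol'])
  have per: "(\<Sum>a\<in>Ja. w s a * Af \<beta> A P r mu V s a)
     = R s - \<beta> * Z s - 2*\<beta>*D*(R s - e') - \<beta>*D\<^sup>2 - J + PV s - V s" for s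
  proof -
    have pw: "w s a * Af \<beta> A P r mu V s a =
        w s a * r s a - \<beta> * (w s a * (r s a - e')\<^sup>2) - 2*\<beta>*D*(w s a * r s a)
        + (2*\<beta>*D*e' - \<beta>*D\<^sup>2 - J - V s) * w s a + (\<Sum>s'\<in>UNIV. w s a * P s a s' * V s')" for a
    proof -
      have sq: "(r s a - e)\<^sup>2 = (r s a - e')\<^sup>2 + 2*D*(r s a) - 2*D*e' + D\<^sup>2"
        unfolding D_def by (simp add: power2_eq_square algebra_simps)
      show ?thesis
        unfolding Af_def Qf_def fsur_def e_def[symmetric] J_def[symmetric] sq
        by (simp add: algebra_simps sum_distrib_left)
    qed
    have pv: "(\<Sum>a\<in>Ja. \<Sum>s'\<in>UNIV. w s a * P s a s' * V s') = PV s"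
      unfolding PV_def Pmu_def Ja_def[symmetric] w_def[symmetric]
      by (subst sum.swap) (simp add: sum_distrib_right)
    have "(\<Sum>a\<in>Ja. w s a * Af \<beta> A P r mu V s a)
      = R s - \<beta> * Z s - 2*\<beta>*D*R s + (2*\<beta>*D*e' - \<beta>*D\<^sup>2 - J - V s) * (\<Sum>a\<in>Ja. w s a) + PV s"
      unfolding pw R_def Z_def
      by (simp add: sum.distrib sum_subtractf sum_distrib_left[symmetric] pv)
    also have "\<dots> = R s - \<beta> * Z s - 2*\<beta>*D*(R s - e') - \<beta>*D\<^sup>2 - J + PV s - V s"
      by (simp add: wsum algebra_simps)
    finally show ?thesis .
  qed
  have pisum: "(\<Sum>s\<in>UNIV. \<pi> s) = 1" using st by (simp add: is_stationary_def)
  have piPV: "(\<Sum>s\<in>UNIV. \<pi> s * PV s) = (\<Sum>s\<in>UNIV. \<pi> s * V s)"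
  proof -
    have "(\<Sum>s\<in>UNIV. \<pi> s * PV s) = (\<Sum>s'\<in>UNIV. (\<Sum>s\<in>UNIV. \<pi> s * Pmu A P mu' s s') * V s')"
      unfolding PV_def sum_distrib_left sum_distrib_right by (subst sum.swap) (simp add: mult.assoc)
    also have "\<dots> = (\<Sum>s\<in>UNIV. \<pi> s * V s)" using st by (simp add: is_stationary_def)
    finally show ?thesis .
  qed
  have e'eq: "e' = (\<Sum>s\<in>UNIV. \<pi> s * R s)"
    unfolding e'_def eta_def R_def \<pi>_def w_def Ja_def ..
  have z'eq: "z' = (\<Sum>s\<in>UNIV. \<pi> s * Z s)"
    unfolding z'_def zeta_def Z_def \<pi>_def w_def Ja_def e'_def ..
  have "(\<Sum>s\<in>UNIV. \<pi> s * (\<Sum>a\<in>Ja. w s a * Af \<beta> A P r mu V s a))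
    = (\<Sum>s\<in>UNIV. \<pi> s * R s) - \<beta> * (\<Sum>s\<in>UNIV. \<pi> s * Z s)
      - 2*\<beta>*D*((\<Sum>s\<in>UNIV. \<pi> s * R s) - e' * (\<Sum>s\<in>UNIV. \<pi> s))
      - (\<beta>*D\<^sup>2 + J) * (\<Sum>s\<in>UNIV. \<pi> s) + (\<Sum>s\<in>UNIV. \<pi> s * PV s) - (\<Sum>s\<in>UNIV. \<pi> s * V s)"
    unfolding per
    by (simp add: algebra_simps sum.distrib sum_subtractf sum_distrib_left sum_distrib_right)
  also have "\<dots> = e' - \<beta> * z' - \<beta>*D\<^sup>2 - J"
    using pisum piPV e'eq z'eq by simp
  finally have main: "(\<Sum>s\<in>UNIV. \<pi> s * (\<Sum>a\<in>Ja. w s a * Af \<beta> A P r mu V s a)) = e' - \<beta> * z' - \<beta>*D\<^sup>2 - J" .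
  have "Jmv \<beta> A P r mu' = e' - \<beta> * z'" unfolding Jmv_def e'_def z'_def ..
  thus ?thesis using main unfolding \<pi>_def w_def Ja_def J_def D_def e_def e'_def by simp
qed

end
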